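(* Let $a\geq5$. The function $F\colon[0,+\infty)\times[0,+\infty)\to[0,+\infty)\times[0,+\infty)$ defined by $$F(z,w)=\left(\frac{z+w}{1+z+w},\ \frac{z\bigl(a(1+z)+(a+3)w\bigr)}{(1+z+w)^2}\right)$$ is injective. *)

theory Defs
  imports Complex_Main
begin

definition F_map :: "real \<Rightarrow> real \<times> real \<Rightarrow> real \<times> real" where
  "F_map a = (\<lambda>(z, w). ((z + w) / (1 + z + w),
                         z * (a * (1 + z) + (a + 3) * w) / (1 + z + w)^2))"

end

theory Submission
  imports Defs
begin

theorem lemma4p5:
  fixes a :: real
  assumes "a \<ge> 5"
  shows "inj_on (F_map a) ({0..} \<times> {0..})"
proof (rule inj_onI)
  fix p q assume p: "p \<in> {0::real..} \<times> {0..}" and q: "q \<in> {0::real..} \<times> {0..}"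
    and eq: "F_map a p = F_map a q"
  obtain z1 w1 where P: "p = (z1, w1)" by (cases p)
  obtain z2 w2 where Q: "q = (z2, w2)" by (cases q)
  have z1: "z1 \<ge> 0" "w1 \<ge> 0" using p P by auto
  have z2: "z2 \<ge> 0" "w2 \<ge> 0" using q Q by auto
  define s1 where "s1 = z1 + w1"
  define s2 where "s2 = z2 + w2"
  have s1p: "1 + s1 > 0" "1 + z1 + w1 = 1 + s1" using z1 s1_def by auto
  have s2p: "1 + s2 > 0" "1 + z2 + w2 = 1 + s2" using z2 s2_def by auto
  have e1: "s1 / (1 + s1) = s2 / (1 + s2)"
    and e2: "z1 * (a * (1 + z1) + (a + 3) * w1) / (1 + s1)^2
           = z2 * (a * (1 + z2) + (a + 3) * w2) / (1 + s2)^2"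
    using eq P Q s1p s2p by (auto simp: F_map_def s1_def s2_def add.assoc)
  have "s1 * (1 + s2) = s2 * (1 + s1)" using e1 s1p s2p by (simp add: field_simps)
  hence ss: "s1 = s2" by (simp add: algebra_simps)
  have "z1 * (a * (1 + z1) + (a + 3) * w1) = z2 * (a * (1 + z2) + (a + 3) * w2)"
    using e2 ss s2p by (simp add: field_simps)
  hence g: "z1 * (a + (a+3)*s1 - 3*z1) = z2 * (a + (a+3)*s1 - 3*z2)"
  proof -
    have hw: "w1 = s1 - z1" "w2 = s1 - z2" using ss s1_def s2_def by auto
    from \<open>z1 * (a * (1 + z1) + (a + 3) * w1) = z2 * (a * (1 + z2) + (a + 3) * w2)\<close>[unfolded hw]
    show ?thesis by (simp add: algebra_simps)
  qed
  have "(z1 - z2) * (a + (a+3)*s1 - 3*(z1+z2)) = 0"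
    using g by (simp add: algebra_simps)
  moreover have "a + (a+3)*s1 - 3*(z1+z2) > 0"
  proof -
    have "z1 \<le> s1" "z2 \<le> s1" using z1 z2 ss s1_def s2_def by auto
    moreover have "s1 \<ge> 0" using z1 s1_def by auto
    moreover have "(a - 3) * s1 \<ge> 0" using assms \<open>s1 \<ge> 0\<close> by simp
    ultimately show ?thesis using assms by (simp add: algebra_simps)
  qed
  ultimately have "z1 = z2" by simp
  moreover have "w1 = w2" using ss \<open>z1 = z2\<close> s1_def s2_def by simp
  ultimately show "p = q" using P Q by simp
qed

end
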